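(* Let $G$ be a finite, connected, simple $3$-regular graph on more than $6$ vertices that is $4$-ordered. Then $G$ does not contain a square, i.e. $G$ has no cycle of length $4$.
   Context: A simple graph $G$ is called $k$-ordered if for every sequence $v_1,\ldots,v_k$ of $k$ distinct vertices of $G$ there exists a cycle in $G$ containing these $k$ vertices in the specified (cyclic) order. *)

theory Defs
  imports Main "HOL-Library.Sublist"
begin

definition simple_graph :: "'a set \<Rightarrow> ('a \<Rightarrow> 'a \<Rightarrow> bool) \<Rightarrow> bool" where
  "simple_graph V E \<longleftrightarrow>
     (\<forall>u v. E u v \<longrightarrow> u \<in> V \<and> v \<in> V) \<and>
     (\<forall>u v. E u v \<longrightarrow> E v u) \<and>
     (\<forall>v. \<not> E v v)"

definition connected_graph :: "'a set \<Rightarrow> ('a \<Rightarrow> 'a \<Rightarrow> bool) \<Rightarrow> bool" where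
  "connected_graph V E \<longleftrightarrow> (\<forall>u\<in>V. \<forall>v\<in>V. E\<^sup>*\<^sup>* u v)"

definition regular_graph :: "nat \<Rightarrow> 'a set \<Rightarrow> ('a \<Rightarrow> 'a \<Rightarrow> bool) \<Rightarrow> bool" where
  "regular_graph d V E \<longleftrightarrow> (\<forall>v\<in>V. card {u \<in> V. E v u} = d)"

definition is_cycle :: "'a set \<Rightarrow> ('a \<Rightarrow> 'a \<Rightarrow> bool) \<Rightarrow> 'a list \<Rightarrow> bool" where
  "is_cycle V E c \<longleftrightarrow>
     length c \<ge> 3 \<and> distinct c \<and> set c \<subseteq> V \<and>
     (\<forall>i < length c. E (c ! i) (c ! ((i + 1) mod length c)))"

text \<open>G is k-ordered: every sequence of k distinct vertices lies on some cycle in the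
specified cyclic order. Since every rotation (and reversal) of a cycle list is again a
cycle list, "in cyclic order" amounts to being a subsequence of some cycle list.\<close>
definition k_ordered :: "nat \<Rightarrow> 'a set \<Rightarrow> ('a \<Rightarrow> 'a \<Rightarrow> bool) \<Rightarrow> bool" where
  "k_ordered k V E \<longleftrightarrow>
     (\<forall>vs. length vs = k \<and> distinct vs \<and> set vs \<subseteq> V \<longrightarrow>
        (\<exists>c. is_cycle V E c \<and> subseq vs c))"

end

theory Submission imports Defs begin

lemma list_emb_idx:
  assumes "list_emb P xs ys"
  shows "\<exists>f. (\<forall>i<length xs. f i < length ys \<and> P (xs!i) (ys!(f i))) \<and>
             (\<forall>i j. i < j \<longrightarrow> j < length xs \<longrightarrow> f i < f j)"
  using assms
proof (induction rule: list_emb.induct)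
  case (list_emb_Nil ys)
  then show ?case by auto
next
  case (list_emb_Cons xs ys y)
  then obtain f where f: "\<forall>i<length xs. f i < length ys \<and> P (xs!i) (ys!(f i))"
    "\<forall>i j. i < j \<longrightarrow> j < length xs \<longrightarrow> f i < f j" by blast
  show ?case by (rule exI[of _ "\<lambda>i. Suc (f i)"]) (use f in auto)
next
  case (list_emb_Cons2 x y xs ys)
  then obtain f where f: "\<forall>i<length xs. f i < length ys \<and> P (xs!i) (ys!(f i))"
    "\<forall>i j. i < j \<longrightarrow> j < length xs \<longrightarrow> f i < f j" by blast
  define g where "g i = (case i of 0 \<Rightarrow> 0 | Suc k \<Rightarrow> Suc (f k))" for i
  have "\<forall>i<length (x#xs). g i < length (y#ys) \<and> P ((x#xs)!i) ((y#ys)!(g i))"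
    using f list_emb_Cons2.hyps(1) by (auto simp: g_def split: nat.splits)
  moreover have "\<forall>i j. i < j \<longrightarrow> j < length (x#xs) \<longrightarrow> g i < g j"
    using f by (auto simp: g_def split: nat.splits)
  ultimately show ?case by blast
qed

lemma subseq4:
  assumes "subseq [v1,v2,v3,v4] c"
  shows "\<exists>i1 i2 i3 i4. i1 < i2 \<and> i2 < i3 \<and> i3 < i4 \<and> i4 < length c \<and>
     c!i1 = v1 \<and> c!i2 = v2 \<and> c!i3 = v3 \<and> c!i4 = v4"
proof -
  from list_emb_idx[OF assms] obtain f where f0: "\<forall>i<length [v1,v2,v3,v4]. f i < length c \<and> [v1,v2,v3,v4]!i = c!(f i)"
    "\<forall>i j. i < j \<longrightarrow> j < length [v1,v2,v3,v4] \<longrightarrow> f i < f j"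
    by blast
  have f: "\<forall>i<4. f i < length c \<and> [v1,v2,v3,v4]!i = c!(f i)"
    "\<forall>i j. i < j \<longrightarrow> j < 4 \<longrightarrow> f i < f j" using f0 by auto
  show ?thesis
    apply (rule exI[of _ "f 0"], rule exI[of _ "f 1"], rule exI[of _ "f 2"], rule exI[of _ "f 3"])
    using f(1)[rule_format, of 0] f(1)[rule_format, of 1] f(1)[rule_format, of 2] f(1)[rule_format, of 3]
      f(2)[rule_format, of 0 1] f(2)[rule_format, of 1 2] f(2)[rule_format, of 2 3]
    by (simp add: numeral_eq_Suc)
qed

lemma dIVT:
  fixes f :: "nat \<Rightarrow> bool"
  assumes "i < j" "f i" "\<not> f j"
  shows "\<exists>k. i \<le> k \<and> k < j \<and> f k \<and> \<not> f (Suc k)"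
  using assms
proof (induction j)
  case 0 then show ?case by simp
next
  case (Suc j)
  show ?case
  proof (cases "f j")
    case True then show ?thesis using Suc by (intro exI[of _ j]) auto
  next
    case False
    then have "i < j" using Suc by (metis less_antisym)
    then show ?thesis using Suc False by (metis less_SucI)
  qed
qed

lemma cut_lemma:
  assumes cyc: "is_cycle V E cy" and sub: "subseq [s1,o1,s2,o2] cy"
    and S: "s1 \<in> S" "s2 \<in> S" "o1 \<notin> S" "o2 \<notin> S"
    and sym: "\<And>u v. E u v \<Longrightarrow> E v u"
    and bd: "\<And>u w. u \<in> S \<Longrightarrow> w \<notin> S \<Longrightarrow> E u w \<Longrightarrow> u = p \<or> u = q"
    and un: "\<And>u w1 w2. u \<in> S \<Longrightarrow> w1 \<notin> S \<Longrightarrow> w2 \<notin> S \<Longrightarrow> E u w1 \<Longrightarrow> E u w2 \<Longrightarrow> w1 = w2"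
  shows False
proof -
  obtain i1 i2 i3 i4 where ii: "i1 < i2" "i2 < i3" "i3 < i4" "i4 < length cy"
    "cy!i1 = s1" "cy!i2 = o1" "cy!i3 = s2" "cy!i4 = o2"
    using subseq4[OF sub] by blast
  have dist: "distinct cy" and ed: "\<And>i. i < length cy \<Longrightarrow> E (cy!i) (cy!((i+1) mod length cy))"
    using cyc unfolding is_cycle_def by auto
  have ed2: "E (cy!i) (cy!(Suc i))" if "Suc i < length cy" for i
    using ed[of i] that by simp
  obtain k1 where k1: "i1 \<le> k1" "k1 < i2" "cy!k1 \<in> S" "cy!(Suc k1) \<notin> S"
    using dIVT[of i1 i2 "\<lambda>k. cy!k \<in> S"] ii S by auto
  obtain j where j: "i2 \<le> j" "j < i3" "cy!j \<notin> S" "cy!(Suc j) \<in> S"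
    using dIVT[of i2 i3 "\<lambda>k. cy!k \<notin> S"] ii S by auto
  obtain k2 where k2: "i3 \<le> k2" "k2 < i4" "cy!k2 \<in> S" "cy!(Suc k2) \<notin> S"
    using dIVT[of i3 i4 "\<lambda>k. cy!k \<in> S"] ii S by auto
  have e1: "E (cy!k1) (cy!Suc k1)" using ed2 k1 ii by simp
  have e2: "E (cy!k2) (cy!Suc k2)" using ed2 k2 ii by simp
  have e3: "E (cy!Suc j) (cy!j)" using ed2[of j] j ii sym by simp
  have neq: "a \<noteq> b \<Longrightarrow> a < length cy \<Longrightarrow> b < length cy \<Longrightarrow> cy!a \<noteq> cy!b" for a b
    using dist nth_eq_iff_index_eq by blast
  have d12: "cy!k1 \<noteq> cy!k2" using neq k1 k2 ii by simp
  have d13: "cy!k1 \<noteq> cy!Suc j" using neq k1 j ii by simp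
  have d23: "cy!k2 \<noteq> cy!Suc j"
  proof
    assume h: "cy!k2 = cy!Suc j"
    have "cy!Suc k2 = cy!j" using un[OF k2(3) k2(4) j(3) e2] h e3 by simp
    moreover have "Suc k2 \<noteq> j" using j k2 by simp
    ultimately show False using neq[of "Suc k2" j] k2 j ii by simp
  qed
  have "cy!k1 = p \<or> cy!k1 = q" using bd[OF k1(3) k1(4) e1] .
  moreover have "cy!k2 = p \<or> cy!k2 = q" using bd[OF k2(3) k2(4) e2] .
  moreover have "cy!Suc j = p \<or> cy!Suc j = q" using bd[OF j(4) j(3) e3] .
  ultimately show False using d12 d13 d23 by auto
qed

lemma opp_lemma:
  assumes cyc: "is_cycle V E cy" and sub: "subseq [a,c,a',c'] cy"
    and sym: "\<And>u v. E u v \<Longrightarrow> E v u"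
    and na: "\<And>v. E a v \<Longrightarrow> v = b \<or> v = d \<or> v = a'"
    and nc: "\<And>v. E c v \<Longrightarrow> v = b \<or> v = d \<or> v = c'"
  shows False
proof -
  obtain i1 i2 i3 i4 where ii: "i1 < i2" "i2 < i3" "i3 < i4" "i4 < length cy"
    "cy!i1 = a" "cy!i2 = c" "cy!i3 = a'" "cy!i4 = c'"
    using subseq4[OF sub] by blast
  define n where "n = length cy"
  have dist: "distinct cy" and ed: "\<And>i. i < n \<Longrightarrow> E (cy!i) (cy!((i+1) mod n))"
    using cyc unfolding is_cycle_def n_def by auto
  have neq: "x \<noteq> y \<Longrightarrow> x < n \<Longrightarrow> y < n \<Longrightarrow> cy!x \<noteq> cy!y" for x y
    using dist nth_eq_iff_index_eq n_def by blast
  have ed2: "E (cy!i) (cy!(Suc i))" if "Suc i < n" for i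
    using ed[of i] that by simp
  define pi where "pi = (if i1 = 0 then n - 1 else i1 - 1)"
  have n0: "0 < n" using ii(4) n_def by linarith
  have pin: "pi < n" "(pi + 1) mod n = i1"
  proof -
    show "pi < n" using ii unfolding pi_def n_def by auto
    show "(pi + 1) mod n = i1"
    proof (cases "i1 = 0")
      case True
      then have "pi + 1 = n" using n0 unfolding pi_def by simp
      then show ?thesis using True by simp
    next
      case False
      then show ?thesis using ii unfolding pi_def n_def by auto
    qed
  qed
  have ep: "E a (cy!pi)" using ed[OF pin(1)] pin(2) ii sym by simp
  have es: "E a (cy!Suc i1)" using ed2[of i1] ii n_def by simp
  have ec: "E c (cy!Suc i2)" using ed2[of i2] ii n_def by simp
  have pi_ne: "pi \<noteq> i3" "pi \<noteq> Suc i1" "pi \<noteq> Suc i2" using ii unfolding pi_def n_def by auto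
  have "cy!pi \<noteq> a'" using neq[of pi i3] pi_ne pin ii n_def by simp
  hence p: "cy!pi = b \<or> cy!pi = d" using na[OF ep] by blast
  have "cy!Suc i1 \<noteq> a'" using neq[of "Suc i1" i3] ii n_def by simp
  hence s: "cy!Suc i1 = b \<or> cy!Suc i1 = d" using na[OF es] by blast
  have "cy!Suc i2 \<noteq> c'" using neq[of "Suc i2" i4] ii n_def by simp
  hence t: "cy!Suc i2 = b \<or> cy!Suc i2 = d" using nc[OF ec] by blast
  have d1: "cy!pi \<noteq> cy!Suc i1" using neq pi_ne pin ii n_def by simp
  have d2: "cy!pi \<noteq> cy!Suc i2" using neq pi_ne pin ii n_def by simp
  have d3: "cy!Suc i1 \<noteq> cy!Suc i2" using neq[of "Suc i1" "Suc i2"] ii n_def by simp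
  show False using p s t d1 d2 d3 by auto
qed

lemma sg_facts:
  assumes "simple_graph V E"
  shows "\<And>u v. E u v \<Longrightarrow> E v u" "\<And>u v. E u v \<Longrightarrow> u \<in> V" "\<And>u v. E u v \<Longrightarrow> v \<in> V"
    "\<And>v. \<not> E v v"
  using assms unfolding simple_graph_def by blast+

lemma nb3:
  assumes fin: "finite V" and sg: "simple_graph V E" and reg: "regular_graph 3 V E"
    and "E u x" "E u y" "x \<noteq> y" "E u z" "E u w" "z \<notin> {x,y}" "w \<notin> {x,y}"
  shows "z = w"
proof (rule ccontr)
  assume ne: "z \<noteq> w"
  have uV: "u \<in> V" using sg_facts[OF sg] assms by blast
  have sub: "{x,y,z,w} \<subseteq> {v \<in> V. E u v}" using sg_facts[OF sg] assms by blast
  have "card {x,y,z,w} = 4" using assms ne by auto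
  moreover have "card {x,y,z,w} \<le> card {v \<in> V. E u v}"
    using card_mono[OF _ sub] fin by auto
  moreover have "card {v \<in> V. E u v} = 3" using reg uV unfolding regular_graph_def by blast
  ultimately show False by simp
qed

lemma third:
  assumes fin: "finite V" and reg: "regular_graph 3 V E" and uV: "u \<in> V"
  shows "\<exists>z. E u z \<and> z \<noteq> x \<and> z \<noteq> y"
proof (rule ccontr)
  assume "\<not> ?thesis"
  then have "{v \<in> V. E u v} \<subseteq> {x,y}" by auto
  then have "card {v \<in> V. E u v} \<le> card {x,y}" by (simp add: card_mono)
  also have "\<dots> \<le> 2" by (simp add: card_insert_le_m1)
  finally show False using reg uV unfolding regular_graph_def by auto
qed

lemma conn_cross:
  assumes "E\<^sup>*\<^sup>* u v" "u \<in> S" "v \<notin> S"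
  shows "\<exists>x y. x \<in> S \<and> y \<notin> S \<and> E x y"
  using assms by (induction rule: rtranclp_induct) blast+

lemma use_ord:
  assumes "k_ordered 4 V E" "distinct [w,x,y,z]" "set [w,x,y,z] \<subseteq> V"
  shows "\<exists>cy. is_cycle V E cy \<and> subseq [w,x,y,z] cy"
proof -
  have "length [w,x,y,z] = 4" by simp
  then show ?thesis using assms unfolding k_ordered_def by blast
qed

lemma two_out:
  assumes fin: "finite S" and "card S < card V"
  shows "\<exists>o1. o1 \<in> V \<and> o1 \<notin> S"
proof (rule ccontr)
  assume "\<not> ?thesis"
  then have "V \<subseteq> S" by blast
  then have "card V \<le> card S" using fin by (simp add: card_mono)
  then show False using assms by simp
qed

lemma chord_lemma:
  assumes fin: "finite V" and sg: "simple_graph V E" and reg: "regular_graph 3 V E"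
    and cV: "card V > 6" and ord: "k_ordered 4 V E"
    and sq: "E a b" "E b c" "E c d" "E d a" "distinct [a,b,c,d]" and ch: "E a c"
  shows False
proof -
  note g = sg_facts[OF sg]
  have nb: "z = w" if "E u x" "E u y" "x \<noteq> y" "E u z" "E u w" "z \<notin> {x,y}" "w \<notin> {x,y}" for u x y z w
    using nb3[OF fin sg reg that] .
  define S where "S = set [a,b,c,d]"
  have dd: "a \<noteq> b" "a \<noteq> c" "a \<noteq> d" "b \<noteq> c" "b \<noteq> d" "c \<noteq> d" using sq(5) by auto
  have na: "v \<in> S" if "E a v" for v
  proof (cases "v \<in> {b,d}")
    case True then show ?thesis unfolding S_def by auto
  next
    case False
    have "c = v" using nb[of a b d c v] sq(1) g(1)[OF sq(4)] dd ch that False by blast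
    then show ?thesis unfolding S_def by auto
  qed
  have nc: "v \<in> S" if "E c v" for v
  proof (cases "v \<in> {b,d}")
    case True then show ?thesis unfolding S_def by auto
  next
    case False
    have "a = v" using nb[of c b d a v] g(1)[OF sq(2)] sq(3) dd g(1)[OF ch] that False by blast
    then show ?thesis unfolding S_def by auto
  qed
  have bd: "u = b \<or> u = d" if "u \<in> S" "w \<notin> S" "E u w" for u w
  proof -
    have "u \<noteq> a" using na that by blast
    moreover have "u \<noteq> c" using nc that by blast
    ultimately show ?thesis using that(1) unfolding S_def by auto
  qed
  have un: "w1 = w2" if "u \<in> S" "w1 \<notin> S" "w2 \<notin> S" "E u w1" "E u w2" for u w1 w2
  proof -
    have "u = a \<or> u = b \<or> u = c \<or> u = d" using that(1) unfolding S_def by auto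
    then show ?thesis
    proof (elim disjE)
      assume "u = a" then show ?thesis using na that by blast
    next
      assume "u = c" then show ?thesis using nc that by blast
    next
      assume u: "u = b"
      show ?thesis using nb[of b a c w1 w2] u that g(1)[OF sq(1)] sq(2) dd unfolding S_def by auto
    next
      assume u: "u = d"
      show ?thesis using nb[of d a c w1 w2] u that sq(4) g(1)[OF sq(3)] dd unfolding S_def by auto
    qed
  qed
  have cS: "card S \<le> 4" unfolding S_def using card_length[of "[a,b,c,d]"] by simp
  obtain o1 where o1: "o1 \<in> V" "o1 \<notin> S" using two_out[of S V] cS cV unfolding S_def by auto
  obtain o2 where o2: "o2 \<in> V" "o2 \<notin> insert o1 S"
  proof -
    have "card (insert o1 S) \<le> Suc (card S)" unfolding S_def by (simp add: card_insert_if)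
    then have "card (insert o1 S) < card V" using cS cV by linarith
    then show ?thesis using two_out[of "insert o1 S" V] that unfolding S_def by auto
  qed
  have "distinct [a,o1,c,o2]" using o1 o2 dd unfolding S_def by auto
  moreover have "set [a,o1,c,o2] \<subseteq> V" using o1 o2 g(2)[OF sq(1)] g(2)[OF sq(3)] by auto
  ultimately obtain cy where cyc: "is_cycle V E cy" and sub: "subseq [a,o1,c,o2] cy" using use_ord[OF ord] by blast
  have aS: "a \<in> S" and cS': "c \<in> S" unfolding S_def by simp_all
  have o2S: "o2 \<notin> S" using o2 by blast
  show False
    by (rule cut_lemma[OF cyc sub aS cS' o1(2) o2S, where p=b and q=d], erule g(1), erule (2) bd, erule (4) un)
qed

lemma opp_eq:
  assumes fin: "finite V" and sg: "simple_graph V E" and reg: "regular_graph 3 V E"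
    and ord: "k_ordered 4 V E"
    and sq: "E a b" "E b c" "E c d" "E d a" "distinct [a,b,c,d]" and nch: "\<not> E a c"
    and a': "E a a'" "a' \<notin> {b,d}" and c': "E c c'" "c' \<notin> {b,d}"
  shows "a' = c'"
proof (rule ccontr)
  assume ne: "a' \<noteq> c'"
  note g = sg_facts[OF sg]
  have nb: "z = w" if "E u x" "E u y" "x \<noteq> y" "E u z" "E u w" "z \<notin> {x,y}" "w \<notin> {x,y}" for u x y z w
    using nb3[OF fin sg reg that] .
  have dd: "a \<noteq> b" "a \<noteq> c" "a \<noteq> d" "b \<noteq> c" "b \<noteq> d" "c \<noteq> d" using sq(5) by auto
  have na: "v = b \<or> v = d \<or> v = a'" if "E a v" for v
    using nb[of a b d a' v] sq(1) g(1)[OF sq(4)] dd a' that by blast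
  have nc: "v = b \<or> v = d \<or> v = c'" if "E c v" for v
    using nb[of c b d c' v] g(1)[OF sq(2)] sq(3) dd c' that by blast
  have x1: "a' \<noteq> a" "c' \<noteq> c" using a' c' g(4) by blast+
  have x2: "a' \<noteq> c" using a'(1) nch by blast
  have x3: "c' \<noteq> a" using c'(1) nch g(1) by blast
  have "distinct [a,c,a',c']" using dd x1 x2 x3 ne by auto
  moreover have "set [a,c,a',c'] \<subseteq> V" using g(2)[OF sq(1)] g(2)[OF sq(3)] g(3)[OF a'(1)] g(3)[OF c'(1)] by auto
  ultimately obtain cy where cyc: "is_cycle V E cy" and sub: "subseq [a,c,a',c'] cy" using use_ord[OF ord] by blast
  show False
    by (rule opp_lemma[OF cyc sub, where b=b and d=d], erule g(1), erule na, erule nc)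
qed

theorem theorem2p1:
  fixes V :: "'a set" and E :: "'a \<Rightarrow> 'a \<Rightarrow> bool"
  assumes "finite V" and "simple_graph V E" and "connected_graph V E"
    and "regular_graph 3 V E" and "card V > 6" and "k_ordered 4 V E"
  shows "\<not> (\<exists>c. is_cycle V E c \<and> length c = 4)"
proof
  assume "\<exists>c. is_cycle V E c \<and> length c = 4"
  then obtain cy where cyc: "is_cycle V E cy" and l4: "length cy = 4" by blast
  note fin = assms(1) and sg = assms(2) and con = assms(3) and reg = assms(4) and cV = assms(5)
    and ord = assms(6)
  note g = sg_facts[OF sg]
  have nb: "z = w" if "E u x" "E u y" "x \<noteq> y" "E u z" "E u w" "z \<notin> {x,y}" "w \<notin> {x,y}" for u x y z w
    using nb3[OF fin sg reg that] .
  define a b c d where "a = cy!0" "b = cy!1" "c = cy!2" "d = cy!3"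
  have cy: "cy = [a,b,c,d]" unfolding a_b_c_d_def using l4
    by (simp add: list_eq_iff_nth_eq numeral_eq_Suc less_Suc_eq)
  have ed0: "\<forall>i<length cy. E (cy!i) (cy!((i+1) mod length cy))" using cyc unfolding is_cycle_def by blast
  have ed: "E (cy!i) (cy!((i+1) mod 4))" if "i < 4" for i using ed0 that l4 by metis
  have e: "((0::nat)+1) mod 4 = 1" "((1::nat)+1) mod 4 = 2" "((2::nat)+1) mod 4 = 3" "((3::nat)+1) mod 4 = 0" by simp_all
  have "E (cy!0) (cy!1)" using ed[of 0] unfolding e by simp
  moreover have "E (cy!1) (cy!2)" using ed[of 1] unfolding e by simp
  moreover have "E (cy!2) (cy!3)" using ed[of 2] unfolding e by simp
  moreover have "E (cy!3) (cy!0)" using ed[of 3] unfolding e by simp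
  ultimately have sq: "E a b" "E b c" "E c d" "E d a" unfolding a_b_c_d_def by simp_all
  have ds: "distinct [a,b,c,d]" using cyc cy unfolding is_cycle_def by simp
  have dd: "a \<noteq> b" "a \<noteq> c" "a \<noteq> d" "b \<noteq> c" "b \<noteq> d" "c \<noteq> d" using ds by auto
  have V4: "a \<in> V" "b \<in> V" "c \<in> V" "d \<in> V" using g(2) sq by blast+
  show False
  proof (cases "E a c \<or> E b d")
    case True
    then show False
    proof
      assume "E a c" then show False using chord_lemma[OF fin sg reg cV ord sq ds] by blast
    next
      assume h: "E b d"
      have "distinct [b,c,d,a]" using dd by auto
      then show False using chord_lemma[OF fin sg reg cV ord sq(2,3,4,1) _ h] by blast
    qed
  next
    case False
    then have nac: "\<not> E a c" and nbd: "\<not> E b d" by auto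
    obtain a' where a': "E a a'" "a' \<noteq> b" "a' \<noteq> d" using third[OF fin reg V4(1)] by blast
    obtain c' where c': "E c c'" "c' \<noteq> b" "c' \<noteq> d" using third[OF fin reg V4(3)] by blast
    obtain b' where b': "E b b'" "b' \<noteq> c" "b' \<noteq> a" using third[OF fin reg V4(2)] by blast
    obtain d' where d': "E d d'" "d' \<noteq> c" "d' \<noteq> a" using third[OF fin reg V4(4)] by blast
    have ac: "a' = c'" using opp_eq[OF fin sg reg ord sq ds nac a'(1) _ c'(1)] a' c' by blast
    have ds2: "distinct [b,c,d,a]" using dd by auto
    have bd: "b' = d'" using opp_eq[OF fin sg reg ord sq(2,3,4,1) ds2 nbd b'(1) _ d'(1)] b' d' by blast
    have na: "v = b \<or> v = d \<or> v = a'" if "E a v" for v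
      using nb[of a b d a' v] sq(1) g(1)[OF sq(4)] dd a' that by blast
    have nc: "v = b \<or> v = d \<or> v = a'" if "E c v" for v
      using nb[of c b d a' v] g(1)[OF sq(2)] sq(3) dd c' ac that by blast
    have nbb: "v = a \<or> v = c \<or> v = b'" if "E b v" for v
      using nb[of b a c b' v] g(1)[OF sq(1)] sq(2) dd b' that by blast
    have ndd: "v = a \<or> v = c \<or> v = b'" if "E d v" for v
      using nb[of d a c b' v] sq(4) g(1)[OF sq(3)] dd d' bd that by blast
    have a'x: "a' \<noteq> a" "a' \<noteq> c" using a'(1) nac g(4) by blast+
    have b'x: "b' \<noteq> b" "b' \<noteq> d" using b'(1) nbd g(4) bd d'(1) by blast+
    have a'c: "E a' a" "E a' c" using a'(1) c'(1) ac g(1) by blast+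
    have b'c: "E b' b" "E b' d" using b'(1) d'(1) bd g(1) by blast+
    have ab': "a' \<noteq> b'"
    proof
      assume h: "a' = b'"
      have "b = d" using nb[of a' a c b d] a'c b'c h dd by auto
      then show False using dd by blast
    qed
    define S where "S = set [a,b,c,d,a',b']"
    have inS: "a \<in> S" "b \<in> S" "c \<in> S" "d \<in> S" "a' \<in> S" "b' \<in> S" unfolding S_def by simp_all
    have Sfull: "v \<in> S" if "u \<in> {a,b,c,d}" "E u v" for u v
    proof -
      from that(1) have "u = a \<or> u = b \<or> u = c \<or> u = d" by simp
      then show ?thesis using na[of v] nc[of v] nbb[of v] ndd[of v] that(2) inS by blast
    qed
    have bdS: "u = a' \<or> u = b'" if "u \<in> S" "w \<notin> S" "E u w" for u w
    proof -
      have "u = a \<or> u = b \<or> u = c \<or> u = d \<or> u = a' \<or> u = b'" using that(1) unfolding S_def by simp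
      then show ?thesis using Sfull[of u w] that by blast
    qed
    have unS: "w1 = w2" if "u \<in> S" "w1 \<notin> S" "w2 \<notin> S" "E u w1" "E u w2" for u w1 w2
    proof -
      have "u \<in> {a,b,c,d} \<or> u = a' \<or> u = b'" using that(1) unfolding S_def by simp
      then show ?thesis
      proof (elim disjE)
        assume "u \<in> {a,b,c,d}" then show ?thesis using Sfull that by blast
      next
        assume u: "u = a'"
        have "w1 \<notin> {a,c}" "w2 \<notin> {a,c}" using that(2,3) inS by blast+
        then show ?thesis using nb[of a' a c w1 w2] u that a'c dd by blast
      next
        assume u: "u = b'"
        have "w1 \<notin> {b,d}" "w2 \<notin> {b,d}" using that(2,3) inS by blast+
        then show ?thesis using nb[of b' b d w1 w2] u that b'c dd by blast
      qed
    qed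
    have cS: "card S \<le> 6" unfolding S_def using card_length[of "[a,b,c,d,a',b']"] by simp
    obtain o1 where o1: "o1 \<in> V" "o1 \<notin> S" using two_out[of S V] cS cV unfolding S_def by auto
    have "E\<^sup>*\<^sup>* a o1" using con V4(1) o1(1) unfolding connected_graph_def by blast
    then obtain x y where xy: "x \<in> S" "y \<notin> S" "E x y" using conn_cross[of E a o1 S] inS o1 by blast
    have yV: "y \<in> V" using g(3) xy(3) by blast
    obtain z where z: "E y z" "z \<noteq> a'" "z \<noteq> b'" using third[OF fin reg yV] by blast
    have zS: "z \<notin> S"
    proof
      assume "z \<in> S"
      then have "z \<in> {a,b,c,d}" using z unfolding S_def by simp
      then have "y \<in> S" using Sfull g(1)[OF z(1)] by blast
      then show False using xy by blast
    qed
    have yz: "y \<noteq> z" using z g(4) by blast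
    have "y \<noteq> a" "y \<noteq> c" "z \<noteq> a" "z \<noteq> c" using xy(2) zS inS by blast+
    then have "distinct [a,y,c,z]" using dd yz by simp
    moreover have "set [a,y,c,z] \<subseteq> V" using V4 yV g(3)[OF z(1)] by auto
    ultimately obtain cy2 where cyc2: "is_cycle V E cy2" and sub: "subseq [a,y,c,z] cy2"
      using use_ord[OF ord] by blast
    show False
      by (rule cut_lemma[OF cyc2 sub inS(1) inS(3) xy(2) zS, where p=a' and q=b'],
          erule g(1), erule (2) bdS, erule (4) unS)
  qed
qed

end
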